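(* If $\ell\ge 5$ is not divisible by three, then the uniform Tur\'an density of the tight $3$-uniform cycle $C_\ell^{(3)}$ is at least $4/27$.
   Context: For $\ell\ge 5$, the tight $3$-uniform cycle $C_\ell^{(3)}$ is the $3$-uniform hypergraph with $\ell$ vertices $v_1,\ldots,v_\ell$ whose edges are exactly the triples $\{v_i,v_{i+1},v_{i+2}\}$, $i\in[\ell]$, indices modulo $\ell$. For an $n$-vertex $3$-uniform hypergraph $H$ and $\varepsilon>0$, the $\varepsilon$-linear density of $H$ is the minimum edge density of an induced subhypergraph of $H$ with at least $\varepsilon n$ vertices. The uniform Tur\'an density of a $3$-uniform hypergraph $F$ is the supremum of all $d\in[0,1]$ such that for every $\varepsilon>0$ there exist arbitrarily large $F$-free $3$-uniform hypergraphs with $\varepsilon$-linear density at least $d$. *)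

theory Defs
  imports Complex_Main
begin

definition hypergraph3 :: "'a set \<Rightarrow> 'a set set \<Rightarrow> bool" where
  "hypergraph3 V E \<longleftrightarrow> (\<forall>e\<in>E. e \<subseteq> V \<and> card e = 3)"

definition tight_cycle_edges :: "nat \<Rightarrow> nat set set" where
  "tight_cycle_edges l = {{i, (i+1) mod l, (i+2) mod l} | i. i < l}"

definition contains_copy :: "'b set \<Rightarrow> 'b set set \<Rightarrow> 'a set \<Rightarrow> 'a set set \<Rightarrow> bool" where
  "contains_copy VF EF V E \<longleftrightarrow>
     (\<exists>f. inj_on f VF \<and> f ` VF \<subseteq> V \<and> (\<forall>e\<in>EF. f ` e \<in> E))"

definition free_of :: "'b set \<Rightarrow> 'b set set \<Rightarrow> 'a set \<Rightarrow> 'a set set \<Rightarrow> bool" where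
  "free_of VF EF V E \<longleftrightarrow> \<not> contains_copy VF EF V E"

definition edge_density :: "'a set set \<Rightarrow> 'a set \<Rightarrow> real" where
  "edge_density E S = real (card {e\<in>E. e \<subseteq> S}) / real (card S choose 3)"

text \<open>epsilon-linear density of an n-vertex hypergraph (V,E): minimum edge density of an
  induced subhypergraph on at least eps*n vertices (1 if there is no such set,
  which only happens for eps > 1).\<close>
definition linear_density :: "real \<Rightarrow> 'a set \<Rightarrow> 'a set set \<Rightarrow> real" where
  "linear_density eps V E =
     (let D = {edge_density E S | S. S \<subseteq> V \<and> real (card S) \<ge> eps * real (card V)}
      in if D = {} then 1 else Min D)"

definition uniform_turan_density :: "'b set \<Rightarrow> 'b set set \<Rightarrow> real" where
  "uniform_turan_density VF EF =
     Sup {d. 0 \<le> d \<and> d \<le> 1 \<and>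
        (\<forall>eps>0. \<forall>N. \<exists>n\<ge>N. \<exists>E::nat set set.
            hypergraph3 {..<n} E \<and> free_of VF EF {..<n} E \<and>
            linear_density eps {..<n} E \<ge> d)}"

end

theory Submission
  imports Defs "HOL-Probability.Hoeffding"
begin


lemma hoeff_pairs:
  fixes P I :: "'a set" and \<epsilon> :: real
  assumes finP: "finite P" and IP: "I \<subseteq> P" and eps: "\<epsilon> > 0" and Ine: "I \<noteq> {}"
  shows "measure_pmf.prob (Pi_pmf P False (\<lambda>_. bernoulli_pmf (1/3)))
           {\<omega>. \<bar>(\<Sum>i\<in>I. if \<omega> i then 1 else 0) - real (card I) / 3\<bar> \<ge> \<epsilon>}
         \<le> 2 * exp (-2 * \<epsilon>\<^sup>2 / real (card I))"
proof -
  define M where "M = Pi_pmf P False (\<lambda>_. bernoulli_pmf (1/3))"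
  define X where "X = (\<lambda>i (\<omega>::'a\<Rightarrow>bool). if \<omega> i then 1 else (0::real))"
  have finI: "finite I" using finP IP finite_subset by blast
  have ind0: "prob_space.indep_vars (measure_pmf M) (\<lambda>_. count_space UNIV) (\<lambda>x f. f x) I"
    unfolding M_def
    by (rule prob_space.indep_vars_subset[OF _ indep_vars_Pi_pmf[OF finP] IP])
       (simp add: measure_pmf.prob_space_axioms)
  have ind: "prob_space.indep_vars (measure_pmf M) (\<lambda>_. borel) X I"
    unfolding X_def
    by (rule prob_space.indep_vars_compose2[OF _ ind0]) (auto simp: measure_pmf.prob_space_axioms)
  interpret H: Hoeffding_ineq "measure_pmf M" I X "\<lambda>_. 0" "\<lambda>_. 1" "\<Sum>i\<in>I. measure_pmf.expectation M (X i)"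
  proof unfold_locales
    show "finite I" by (rule finI)
    show "prob_space.indep_vars (measure_pmf M) (\<lambda>_. borel) X I" by (rule ind)
    fix i assume "i \<in> I"
    show "AE x in measure_pmf M. X i x \<in> {0..1}" unfolding X_def by simp
  qed
  have ex: "measure_pmf.expectation M (X i) = 1/3" if "i \<in> I" for i
  proof -
    have "measure_pmf.expectation M (X i) =
        measure_pmf.expectation (map_pmf (\<lambda>f. f i) M) (\<lambda>b. if b then 1 else 0 :: real)"
      by (simp add: X_def)
    also have "map_pmf (\<lambda>f. f i) M = bernoulli_pmf (1/3)"
      using that IP finP by (auto simp: M_def Pi_pmf_component)
    finally show ?thesis by simp
  qed
  have mu: "(\<Sum>i\<in>I. measure_pmf.expectation M (X i)) = real (card I) / 3"
  proof -
    have "(\<Sum>i\<in>I. measure_pmf.expectation M (X i)) = (\<Sum>i\<in>I. 1/3)"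
      by (rule sum.cong) (simp_all add: ex)
    then show ?thesis by simp
  qed
  have pos: "(\<Sum>i\<in>I. (1 - 0::real)\<^sup>2) > 0" using finI Ine by (simp add: card_gt_0_iff)
  have "measure_pmf.prob M {x \<in> space (measure_pmf M). \<bar>(\<Sum>i\<in>I. X i x) - (\<Sum>i\<in>I. measure_pmf.expectation M (X i))\<bar> \<ge> \<epsilon>}
     \<le> 2 * exp (-2 * \<epsilon>\<^sup>2 / (\<Sum>i\<in>I. (1 - 0)\<^sup>2))"
    by (rule H.Hoeffding_ineq_abs_ge) (use eps pos in auto)
  then show ?thesis unfolding mu by (simp add: M_def X_def)
qed

lemma good_exists:
  fixes n :: nat and \<gamma> :: real
  assumes g: "\<gamma> > 0" and n: "n > 0" and small: "2 * 4^n * exp (-2*\<gamma>^2*real n^2) < 1"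
  shows "\<exists>\<omega>::nat\<times>nat\<Rightarrow>bool. \<forall>X Y. X \<subseteq> {..<n} \<longrightarrow> Y \<subseteq> {..<n} \<longrightarrow>
     \<bar>(\<Sum>i\<in>{p\<in>X\<times>Y. fst p < snd p}. if \<omega> i then 1 else 0) - real (card {p\<in>X\<times>Y. fst p < snd p}) / 3\<bar> < \<gamma> * real n^2"
proof -
  define P where "P = {p\<in>{..<n}\<times>{..<n}. fst p < snd p}"
  define M where "M = Pi_pmf P False (\<lambda>_. bernoulli_pmf (1/3))"
  define Ix where "Ix = (\<lambda>XY::nat set \<times> nat set. {p\<in>fst XY\<times>snd XY. fst p < snd p})"
  define B where "B = (\<lambda>XY. {\<omega>::nat\<times>nat\<Rightarrow>bool. \<gamma> * real n^2 \<le> \<bar>(\<Sum>i\<in>Ix XY. if \<omega> i then 1 else 0) - real (card (Ix XY)) / 3\<bar>})"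
  define C where "C = Pow {..<n} \<times> Pow {..<n::nat}"
  have finP: "finite P" unfolding P_def by simp
  have gn: "\<gamma> * real n^2 > 0" using g n by simp
  have each: "measure_pmf.prob M (B XY) \<le> 2 * exp (-2*\<gamma>^2*real n^2)" if XY: "XY \<in> C" for XY
  proof (cases "Ix XY = {}")
    case True
    then have "B XY = {}" unfolding B_def using gn by auto
    then show ?thesis by simp
  next
    case False
    have IP: "Ix XY \<subseteq> P" using XY unfolding Ix_def P_def C_def by auto
    have finI: "finite (Ix XY)" using IP finP finite_subset by blast
    have cpos: "real (card (Ix XY)) > 0" using False finI by (simp add: card_gt_0_iff)
    have "card (Ix XY) \<le> card ({..<n}\<times>{..<n})"
      by (rule card_mono) (use IP in \<open>auto simp: P_def\<close>)
    then have "card (Ix XY) \<le> n^2" by (simp add: power2_eq_square)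
    then have cle: "real (card (Ix XY)) \<le> real n^2" by (metis of_nat_le_iff of_nat_power)
    have "measure_pmf.prob M (B XY) \<le> 2 * exp (-2 * (\<gamma> * real n^2)\<^sup>2 / real (card (Ix XY)))"
      unfolding M_def B_def by (rule hoeff_pairs[OF finP IP gn False])
    also have "\<dots> \<le> 2 * exp (-2*\<gamma>^2*real n^2)"
    proof -
      have "(\<gamma> * real n^2)\<^sup>2 / real n^2 \<le> (\<gamma> * real n^2)\<^sup>2 / real (card (Ix XY))"
        by (rule divide_left_mono) (use cle cpos n in auto)
      moreover have "(\<gamma> * real n^2)\<^sup>2 / real n^2 = \<gamma>^2 * real n^2"
        using n by (simp add: power2_eq_square)
      ultimately have "-2 * (\<gamma> * real n^2)\<^sup>2 / real (card (Ix XY)) \<le> -2*\<gamma>^2*real n^2"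
        by simp
      then show ?thesis by simp
    qed
    finally show ?thesis .
  qed
  have "measure_pmf.prob M (\<Union>XY\<in>C. B XY) \<le> (\<Sum>XY\<in>C. measure_pmf.prob M (B XY))"
    by (rule measure_UNION_le) (auto simp: C_def)
  also have "\<dots> \<le> (\<Sum>XY\<in>C. 2 * exp (-2*\<gamma>^2*real n^2))"
    by (rule sum_mono) (rule each)
  also have "\<dots> = 4^n * (2 * exp (-2*\<gamma>^2*real n^2))"
  proof -
    have "card C = 2^n * 2^n" unfolding C_def by (simp add: card_cartesian_product card_Pow)
    also have "(2::nat)^n * 2^n = 4^n" by (simp add: power_mult_distrib[symmetric])
    finally show ?thesis by simp
  qed
  also have "\<dots> < 1" using small by simp
  finally have lt: "measure_pmf.prob M (\<Union>XY\<in>C. B XY) < 1" .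
  have "\<exists>\<omega>. \<omega> \<notin> (\<Union>XY\<in>C. B XY)"
  proof (rule ccontr)
    assume "\<not> ?thesis"
    then have "(\<Union>XY\<in>C. B XY) = UNIV" by auto
    then have "measure_pmf.prob M (\<Union>XY\<in>C. B XY) = 1" by simp
    with lt show False by simp
  qed
  then obtain \<omega> where om: "\<omega> \<notin> (\<Union>XY\<in>C. B XY)" by blast
  show ?thesis
  proof (intro exI allI impI)
    fix X Y assume "X \<subseteq> {..<n}" "Y \<subseteq> {..<n}"
    then have "(X,Y) \<in> C" unfolding C_def by auto
    with om have "\<omega> \<notin> B (X,Y)" by blast
    then show "\<bar>(\<Sum>i\<in>{p\<in>X\<times>Y. fst p < snd p}. if \<omega> i then 1 else 0) - real (card {p\<in>X\<times>Y. fst p < snd p}) / 3\<bar> < \<gamma> * real n^2"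
      unfolding B_def Ix_def by auto
  qed
qed



definition Ered :: "nat \<Rightarrow> (nat \<Rightarrow> nat \<Rightarrow> bool) \<Rightarrow> nat set set" where
  "Ered n red = {{i,j,k} | i j k. i < j \<and> j < k \<and> k < n \<and> red i j \<and> \<not> red j k \<and> \<not> red i k}"

definition Rs :: "(nat \<Rightarrow> nat \<Rightarrow> bool) \<Rightarrow> nat \<Rightarrow> nat \<Rightarrow> bool" where
  "Rs red x y = red (min x y) (max x y)"

lemma edge_R:
  assumes "{x,y,z} \<in> Ered n red" "x \<noteq> y" "y \<noteq> z" "x \<noteq> z"
  shows "Rs red x y \<longleftrightarrow> (x < z \<and> y < z)"
proof -
  obtain i j k where e: "{x,y,z} = {i,j,k}" "i < j" "j < k" "red i j" "\<not> red j k" "\<not> red i k"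
    using assms(1) unfolding Ered_def by blast
  have xs: "x \<in> {i,j,k}" "y \<in> {i,j,k}" "z \<in> {i,j,k}" using e(1) by blast+
  have R1: "Rs red i j" "Rs red j i" "\<not> Rs red j k" "\<not> Rs red k j" "\<not> Rs red i k" "\<not> Rs red k i"
    using e(2-6) unfolding Rs_def by (simp_all add: min_def max_def)
  consider "z = k" | "z = i" | "z = j" using xs(3) by blast
  then show ?thesis
  proof cases
    case 1
    then have "x \<in> {i,j}" "y \<in> {i,j}" using xs assms(3,4) by auto
    then show ?thesis using 1 R1 e(2,3) assms(2) by auto
  next
    case 2
    then have "x \<in> {j,k}" "y \<in> {j,k}" using xs assms(3,4) by auto
    then show ?thesis using 2 R1 e(2,3) assms(2) by auto
  next
    case 3
    then have "x \<in> {i,k}" "y \<in> {i,k}" using xs assms(3,4) by auto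
    then show ?thesis using 3 R1 e(2,3) assms(2) by auto
  qed
qed

lemma mod3_aux: "(a + 2*(l::nat)) mod 3 = a \<Longrightarrow> a < 3 \<Longrightarrow> 3 dvd l"
  by presburger

lemma mod3_cycle:
  fixes s :: "nat \<Rightarrow> nat" and l :: nat
  assumes l: "l \<ge> 1" and st: "\<And>t. t < l \<Longrightarrow> s ((t+1) mod l) = (s t + 2) mod 3"
    and s3: "s 0 < 3"
  shows "3 dvd l"
proof -
  have all: "s t = (s 0 + 2*t) mod 3" if "t < l" for t
    using that
  proof (induction t)
    case 0 then show ?case using s3 by simp
  next
    case (Suc t)
    have tl: "t < l" using Suc.prems by simp
    have "s (Suc t) = s ((t+1) mod l)" using Suc.prems by simp
    also have "\<dots> = (s t + 2) mod 3" using tl by (rule st)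
    also have "\<dots> = ((s 0 + 2*t) mod 3 + 2) mod 3" using Suc.IH[OF tl] by simp
    also have "\<dots> = (s 0 + 2 * Suc t) mod 3"
    proof -
      have "s 0 + 2*t + 2 = s 0 + 2 * Suc t" by simp
      then show ?thesis by (metis mod_add_left_eq)
    qed
    finally show ?case .
  qed
  have l1: "l - 1 < l" using l by simp
  have "s 0 = s (((l-1)+1) mod l)" using l by simp
  also have "\<dots> = (s (l-1) + 2) mod 3" using l1 by (rule st)
  also have "\<dots> = ((s 0 + 2*(l-1)) mod 3 + 2) mod 3" using all[OF l1] by simp
  also have "\<dots> = (s 0 + 2*l) mod 3"
  proof -
    have "s 0 + 2*(l-1) + 2 = s 0 + 2*l" using l by simp
    then show ?thesis by (metis mod_add_left_eq)
  qed
  finally have "(s 0 + 2*l) mod 3 = s 0" by simp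
  then show ?thesis using s3 by (rule mod3_aux)
qed

lemma step_aux:
  fixes A B C D :: nat
  assumes e1: "R \<longleftrightarrow> (B < A \<and> C < A)" and e2: "R \<longleftrightarrow> (B < D \<and> C < D)"
    and d: "B \<noteq> D" "C \<noteq> D" "A \<noteq> B" "A \<noteq> C" "B \<noteq> C"
  shows "(if C < B \<and> D < B then 0::nat else if D < C then 1 else 2) =
         ((if B < A \<and> C < A then 0::nat else if C < B then 1 else 2) + 2) mod 3"
proof (cases R)
  case True
  then have h: "B < A" "C < A" "B < D" "C < D" using e1 e2 by simp_all
  then have "\<not> (C < B \<and> D < B)" "\<not> D < C" by simp_all
  with h show ?thesis by simp
next
  case False
  then have n1: "\<not> (B < A \<and> C < A)" and n2: "\<not> (B < D \<and> C < D)" using e1 e2 by simp_all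
  show ?thesis
  proof (cases "C < B")
    case True
    have "D < B"
    proof (rule ccontr)
      assume "\<not> D < B"
      then have "B < D" using d(1) by simp
      then show False using n2 True by simp
    qed
    with True n1 show ?thesis by simp
  next
    case False
    then have BC: "B < C" using d(5) by simp
    have "D < C"
    proof (rule ccontr)
      assume "\<not> D < C"
      then have "C < D" using d(2) by simp
      then show False using n2 BC by simp
    qed
    with False BC n1 show ?thesis by simp
  qed
qed

lemma cycle_free:
  fixes l n :: nat and red
  assumes l5: "l \<ge> 5" and nd: "\<not> 3 dvd l"
  shows "free_of {..<l} (tight_cycle_edges l) {..<n} (Ered n red)"
  unfolding free_of_def contains_copy_def
proof
  assume "\<exists>f. inj_on f {..<l} \<and> f ` {..<l} \<subseteq> {..<n} \<and> (\<forall>e\<in>tight_cycle_edges l. f ` e \<in> Ered n red)"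
  then obtain f where inj: "inj_on f {..<l}" and ed: "\<forall>e\<in>tight_cycle_edges l. f ` e \<in> Ered n red"
    by blast
  define a where "a = (\<lambda>t. f (t mod l))"
  have edge: "{a t, a (t+1), a (t+2)} \<in> Ered n red" for t
  proof -
    have "{t mod l, (t mod l + 1) mod l, (t mod l + 2) mod l} \<in> tight_cycle_edges l"
      unfolding tight_cycle_edges_def using l5 by auto
    then have "f ` {t mod l, (t mod l + 1) mod l, (t mod l + 2) mod l} \<in> Ered n red" using ed by blast
    moreover have "(t mod l + 1) mod l = (t+1) mod l" "(t mod l + 2) mod l = (t+2) mod l"
      by (simp_all only: mod_add_left_eq)
    ultimately show ?thesis unfolding a_def by simp
  qed
  have dist: "a t \<noteq> a (t + d)" if "0 < d" "d < l" for t d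
  proof
    assume "a t = a (t+d)"
    then have "f (t mod l) = f ((t+d) mod l)" unfolding a_def by simp
    moreover have "t mod l \<in> {..<l}" "(t+d) mod l \<in> {..<l}" using l5 by auto
    ultimately have "(t+d) mod l = t mod l" using inj_onD[OF inj] by metis
    then have "l dvd (t+d) - t" using mod_eq_dvd_iff_nat[of t "t+d" l] by simp
    then have "l dvd d" by simp
    with that show False using nat_dvd_not_less by blast
  qed
  have d1: "a t \<noteq> a (t+1)" "a (t+1) \<noteq> a (t+2)" "a t \<noteq> a (t+2)" for t
    using dist[of 1 t] dist[of 1 "t+1"] dist[of 2 t] l5 by (simp_all add: add.assoc)
  define s where "s = (\<lambda>t. if a (t+1) < a t \<and> a (t+2) < a t then 0::nat
                          else if a (t+2) < a (t+1) then 1 else 2)"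
  have step: "s (t+1) = (s t + 2) mod 3" for t
  proof -
    have h: "t+1+1 = t+2" "t+1+2 = t+3" by simp_all
    have dd1: "a (t+1) \<noteq> a (t+2)" "a (t+2) \<noteq> a t" "a (t+1) \<noteq> a t"
      using d1[of t] by auto
    have dd2: "a (t+1) \<noteq> a (t+2)" "a (t+2) \<noteq> a (t+3)" "a (t+1) \<noteq> a (t+3)"
      using d1[of "t+1"] unfolding h .
    have "{a (t+1), a (t+2), a t} \<in> Ered n red" using edge[of t] by (simp add: insert_commute)
    from edge_R[OF this dd1]
    have e1: "Rs red (a (t+1)) (a (t+2)) \<longleftrightarrow> (a (t+1) < a t \<and> a (t+2) < a t)" .
    have "{a (t+1), a (t+2), a (t+3)} \<in> Ered n red" using edge[of "t+1"] unfolding h .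
    from edge_R[OF this dd2]
    have e2: "Rs red (a (t+1)) (a (t+2)) \<longleftrightarrow> (a (t+1) < a (t+3) \<and> a (t+2) < a (t+3))" .
    have sa: "s t = (if a (t+1) < a t \<and> a (t+2) < a t then 0::nat else if a (t+2) < a (t+1) then 1 else 2)"
      unfolding s_def ..
    have sb: "s (t+1) = (if a (t+2) < a (t+1) \<and> a (t+3) < a (t+1) then 0::nat else if a (t+3) < a (t+2) then 1 else 2)"
      unfolding s_def h ..
    show ?thesis unfolding sa sb
      by (rule step_aux[OF e1 e2 dd2(3) dd2(2) dd1(3)[symmetric] dd1(2)[symmetric] dd1(1)])
  qed
  have per: "s (t mod l) = s t" for t
  proof -
    have ak: "a (t mod l + k) = a (t + k)" for k unfolding a_def by (simp add: mod_add_left_eq)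
    have ak0: "a (t mod l) = a t" unfolding a_def by simp
    show ?thesis unfolding s_def by (simp only: ak ak0)
  qed
  have "3 dvd l"
  proof (rule mod3_cycle[of l s])
    show "1 \<le> l" using l5 by simp
    show "s 0 < 3" unfolding s_def by simp
    fix t assume "t < l"
    show "s ((t+1) mod l) = (s t + 2) mod 3" using per[of "t+1"] step[of t] by simp
  qed
  with nd show False by simp
qed



definition rr :: "(nat \<Rightarrow> nat \<Rightarrow> bool) \<Rightarrow> nat \<Rightarrow> nat \<Rightarrow> real" where
  "rr w x y = (if w x y then 1 else 0)"
definition ff :: "(nat \<Rightarrow> nat \<Rightarrow> bool) \<Rightarrow> nat \<Rightarrow> nat \<Rightarrow> real" where
  "ff w x y = rr w x y - 1/3"
definition TT :: "(nat \<Rightarrow> nat \<Rightarrow> bool) \<Rightarrow> nat set \<Rightarrow> real" where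
  "TT w S = (\<Sum>i\<in>S. \<Sum>j\<in>S. \<Sum>k\<in>S. if i < j \<and> j < k then rr w i j * (1 - rr w j k) * (1 - rr w i k) else 0)"
definition N3 :: "nat set \<Rightarrow> real" where
  "N3 S = (\<Sum>i\<in>S. \<Sum>j\<in>S. \<Sum>k\<in>S. if i < j \<and> j < k then 1 else 0)"

lemma restrict2:
  assumes "finite S"
  shows "(\<Sum>x\<in>S. \<Sum>y\<in>S. if P x \<and> Q y then h x y else 0) = (\<Sum>x\<in>{x\<in>S. P x}. \<Sum>y\<in>{y\<in>S. Q y}. h x y)"
proof -
  have "(\<Sum>x\<in>S. \<Sum>y\<in>S. if P x \<and> Q y then h x y else 0) =
        (\<Sum>x\<in>S. if P x then (\<Sum>y\<in>S. if Q y then h x y else 0) else 0)"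
    by (rule sum.cong) auto
  also have "\<dots> = (\<Sum>x\<in>{x\<in>S. P x}. (\<Sum>y\<in>S. if Q y then h x y else 0))"
    using assms by (simp add: sum.inter_filter)
  also have "\<dots> = (\<Sum>x\<in>{x\<in>S. P x}. \<Sum>y\<in>{y\<in>S. Q y}. h x y)"
    using assms by (simp add: sum.inter_filter)
  finally show ?thesis .
qed

lemma outer_bound:
  fixes G :: "nat \<Rightarrow> real"
  assumes "\<And>k. k \<in> S \<Longrightarrow> \<bar>G k\<bar> \<le> c"
  shows "\<bar>\<Sum>k\<in>S. G k\<bar> \<le> real (card S) * c"
proof -
  have "\<bar>\<Sum>k\<in>S. G k\<bar> \<le> (\<Sum>k\<in>S. \<bar>G k\<bar>)" by (rule sum_abs)
  also have "\<dots> \<le> (\<Sum>k\<in>S. c)" by (rule sum_mono) (rule assms)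
  also have "\<dots> = real (card S) * c" by simp
  finally show ?thesis .
qed

lemma count_bound:
  fixes n :: nat and w and \<gamma> :: real and S :: "nat set"
  assumes S: "S \<subseteq> {..<n}" and g: "\<gamma> \<ge> 0"
    and disc: "\<And>X Y. X \<subseteq> {..<n} \<Longrightarrow> Y \<subseteq> {..<n} \<Longrightarrow>
                 \<bar>\<Sum>x\<in>X. \<Sum>y\<in>Y. if x < y then ff w x y else 0\<bar> \<le> \<gamma> * real n^2"
  shows "TT w S \<ge> 4/27 * N3 S - 3 * \<gamma> * real n^3"
proof -
  have finS: "finite S" using S finite_subset by blast
  have cS: "real (card S) \<le> real n"
  proof -
    have "card S \<le> card {..<n}" by (rule card_mono) (use S in auto)
    then show ?thesis by simp
  qed
  define T1 where "T1 = (\<Sum>i\<in>S. \<Sum>j\<in>S. \<Sum>k\<in>S. if i < j \<and> j < k then ff w i j * (1 - rr w j k) * (1 - rr w i k) else 0)"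
  define T2 where "T2 = (\<Sum>i\<in>S. \<Sum>j\<in>S. \<Sum>k\<in>S. if i < j \<and> j < k then ff w j k * (1 - rr w i k) else 0)"
  define T3 where "T3 = (\<Sum>i\<in>S. \<Sum>j\<in>S. \<Sum>k\<in>S. if i < j \<and> j < k then ff w i k else 0)"
  have pw: "rr w i j * (1 - rr w j k) * (1 - rr w i k) =
      4/27 + ff w i j * (1 - rr w j k) * (1 - rr w i k) - 1/3 * (ff w j k * (1 - rr w i k)) - 2/9 * ff w i k"
    for i j k unfolding ff_def rr_def by auto
  have "TT w S = (\<Sum>i\<in>S. \<Sum>j\<in>S. \<Sum>k\<in>S. 4/27 * (if i < j \<and> j < k then 1 else 0)
        + (if i < j \<and> j < k then ff w i j * (1 - rr w j k) * (1 - rr w i k) else 0)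
        - 1/3 * (if i < j \<and> j < k then ff w j k * (1 - rr w i k) else 0)
        - 2/9 * (if i < j \<and> j < k then ff w i k else 0))"
    unfolding TT_def by (intro sum.cong refl) (simp add: pw)
  also have "\<dots> = 4/27 * N3 S + T1 - 1/3 * T2 - 2/9 * T3"
    unfolding N3_def T1_def T2_def T3_def
    by (simp add: sum.distrib sum_subtractf sum_distrib_left)
  finally have dec: "TT w S = 4/27 * N3 S + T1 - 1/3 * T2 - 2/9 * T3" .
  have bnd: "\<bar>\<Sum>x\<in>{x\<in>S. P x}. \<Sum>y\<in>{y\<in>S. Q y}. if x < y then ff w x y else 0\<bar> \<le> \<gamma> * real n^2"
    for P Q by (rule disc) (use S in auto)
  have "\<bar>T1\<bar> \<le> real (card S) * (\<gamma> * real n^2)"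
  proof -
    have "T1 = (\<Sum>k\<in>S. \<Sum>i\<in>S. \<Sum>j\<in>S. if i < j \<and> j < k then ff w i j * (1 - rr w j k) * (1 - rr w i k) else 0)"
      unfolding T1_def by (subst sum.swap) (subst (2) sum.swap, rule refl)
    also have "\<dots> = (\<Sum>k\<in>S. \<Sum>i\<in>S. \<Sum>j\<in>S. if (i < k \<and> \<not> w i k) \<and> (j < k \<and> \<not> w j k) then (if i < j then ff w i j else 0) else 0)"
      by (intro sum.cong refl) (auto simp: rr_def)
    also have "\<dots> = (\<Sum>k\<in>S. \<Sum>i\<in>{i\<in>S. i < k \<and> \<not> w i k}. \<Sum>j\<in>{j\<in>S. j < k \<and> \<not> w j k}. if i < j then ff w i j else 0)"
      by (intro sum.cong refl restrict2 finS)
    finally have eq: "T1 = (\<Sum>k\<in>S. \<Sum>i\<in>{i\<in>S. i < k \<and> \<not> w i k}. \<Sum>j\<in>{j\<in>S. j < k \<and> \<not> w j k}. if i < j then ff w i j else 0)" .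
    show ?thesis unfolding eq by (rule outer_bound) (rule bnd)
  qed
  moreover have "\<bar>T2\<bar> \<le> real (card S) * (\<gamma> * real n^2)"
  proof -
    have "T2 = (\<Sum>i\<in>S. \<Sum>j\<in>S. \<Sum>k\<in>S. if (i < j) \<and> (i < k \<and> \<not> w i k) then (if j < k then ff w j k else 0) else 0)"
      unfolding T2_def by (intro sum.cong refl) (auto simp: rr_def)
    also have "\<dots> = (\<Sum>i\<in>S. \<Sum>j\<in>{j\<in>S. i < j}. \<Sum>k\<in>{k\<in>S. i < k \<and> \<not> w i k}. if j < k then ff w j k else 0)"
      by (intro sum.cong refl restrict2 finS)
    finally have eq: "T2 = (\<Sum>i\<in>S. \<Sum>j\<in>{j\<in>S. i < j}. \<Sum>k\<in>{k\<in>S. i < k \<and> \<not> w i k}. if j < k then ff w j k else 0)" .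
    show ?thesis unfolding eq by (rule outer_bound) (rule bnd)
  qed
  moreover have "\<bar>T3\<bar> \<le> real (card S) * (\<gamma> * real n^2)"
  proof -
    have "T3 = (\<Sum>j\<in>S. \<Sum>i\<in>S. \<Sum>k\<in>S. if i < j \<and> j < k then ff w i k else 0)"
      unfolding T3_def by (rule sum.swap)
    also have "\<dots> = (\<Sum>j\<in>S. \<Sum>i\<in>S. \<Sum>k\<in>S. if i < j \<and> j < k then (if i < k then ff w i k else 0) else 0)"
      by (intro sum.cong refl) auto
    also have "\<dots> = (\<Sum>j\<in>S. \<Sum>i\<in>{i\<in>S. i < j}. \<Sum>k\<in>{k\<in>S. j < k}. if i < k then ff w i k else 0)"
      by (intro sum.cong refl restrict2 finS)
    finally have eq: "T3 = (\<Sum>j\<in>S. \<Sum>i\<in>{i\<in>S. i < j}. \<Sum>k\<in>{k\<in>S. j < k}. if i < k then ff w i k else 0)" .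
    show ?thesis unfolding eq by (rule outer_bound) (rule bnd)
  qed
  moreover have "real (card S) * (\<gamma> * real n^2) \<le> \<gamma> * real n^3"
  proof -
    have "real (card S) * (\<gamma> * real n^2) \<le> real n * (\<gamma> * real n^2)"
      by (rule mult_right_mono) (use cS g in auto)
    then show ?thesis by (simp add: power2_eq_square power3_eq_cube algebra_simps)
  qed
  ultimately show ?thesis unfolding dec abs_le_iff by linarith
qed



lemma sorted_triple_eq:
  fixes i j k i' j' k' :: nat
  assumes eq: "{i,j,k} = {i',j',k'}" and o: "i<j" "j<k" "i'<j'" "j'<k'"
  shows "i = i' \<and> j = j' \<and> k = k'"
proof -
  have a: "i \<in> {i',j',k'}" "j \<in> {i',j',k'}" "k \<in> {i',j',k'}" using eq by blast+
  have b: "i' \<in> {i,j,k}" "j' \<in> {i,j,k}" "k' \<in> {i,j,k}" using eq by blast+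
  have "i' \<le> i" using a(1) o by auto
  moreover have "i \<le> i'" using b(1) o by auto
  ultimately have 1: "i = i'" by simp
  have "k \<le> k'" using a(3) o by auto
  moreover have "k' \<le> k" using b(3) o by auto
  ultimately have 3: "k = k'" by simp
  have "j = j'" using a(2) 1 3 o by auto
  with 1 3 show ?thesis by simp
qed

lemma triple_card:
  fixes S :: "nat set" and Q :: "nat \<Rightarrow> nat \<Rightarrow> nat \<Rightarrow> bool"
  assumes finS: "finite S"
  shows "real (card {e. \<exists>i j k. e = {i,j,k} \<and> i\<in>S \<and> j\<in>S \<and> k\<in>S \<and> i<j \<and> j<k \<and> Q i j k}) =
         (\<Sum>i\<in>S. \<Sum>j\<in>S. \<Sum>k\<in>S. if i<j \<and> j<k \<and> Q i j k then 1 else 0)"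
proof -
  define P where "P = (\<lambda>(i::nat,j::nat,k::nat). i<j \<and> j<k \<and> Q i j k)"
  define Tr where "Tr = {t\<in>S\<times>S\<times>S. P t}"
  define g where "g = (\<lambda>(i::nat,j::nat,k::nat). {i,j,k})"
  have inj: "inj_on g Tr"
  proof (rule inj_onI)
    fix t t' assume tt: "t\<in>Tr" "t'\<in>Tr" "g t = g t'"
    obtain i j k where t: "t = (i,j,k)" by (cases t) auto
    obtain i' j' k' where t': "t' = (i',j',k')" by (cases t') auto
    have o: "i<j" "j<k" "i'<j'" "j'<k'" using tt(1,2) t t' unfolding Tr_def P_def by auto
    have eq: "{i,j,k} = {i',j',k'}" using tt(3) t t' unfolding g_def by simp
    from sorted_triple_eq[OF eq o] show "t = t'" using t t' by simp
  qed
  have img: "{e. \<exists>i j k. e = {i,j,k} \<and> i\<in>S \<and> j\<in>S \<and> k\<in>S \<and> i<j \<and> j<k \<and> Q i j k} = g ` Tr"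
  proof
    show "{e. \<exists>i j k. e = {i,j,k} \<and> i\<in>S \<and> j\<in>S \<and> k\<in>S \<and> i<j \<and> j<k \<and> Q i j k} \<subseteq> g ` Tr"
    proof
      fix e assume "e \<in> {e. \<exists>i j k. e = {i,j,k} \<and> i\<in>S \<and> j\<in>S \<and> k\<in>S \<and> i<j \<and> j<k \<and> Q i j k}"
      then obtain i j k where h: "e = {i,j,k}" "i\<in>S" "j\<in>S" "k\<in>S" "i<j" "j<k" "Q i j k" by blast
      have "(i,j,k) \<in> Tr" using h unfolding Tr_def P_def by simp
      moreover have "e = g (i,j,k)" using h unfolding g_def by simp
      ultimately show "e \<in> g ` Tr" by blast
    qed
    show "g ` Tr \<subseteq> {e. \<exists>i j k. e = {i,j,k} \<and> i\<in>S \<and> j\<in>S \<and> k\<in>S \<and> i<j \<and> j<k \<and> Q i j k}"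
      unfolding Tr_def P_def g_def by auto
  qed
  have "real (card (g ` Tr)) = real (card Tr)" using card_image[OF inj] by simp
  also have "\<dots> = (\<Sum>t\<in>Tr. 1)" by simp
  also have "\<dots> = (\<Sum>t\<in>S\<times>S\<times>S. if P t then 1 else 0)"
    unfolding Tr_def using finS by (simp add: sum.If_cases Int_def)
  also have "\<dots> = (\<Sum>(i,j,k)\<in>S\<times>S\<times>S. if i<j \<and> j<k \<and> Q i j k then 1 else 0)"
    by (intro sum.cong refl) (auto simp: P_def split: prod.splits)
  also have "\<dots> = (\<Sum>i\<in>S. \<Sum>j\<in>S. \<Sum>k\<in>S. if i<j \<and> j<k \<and> Q i j k then 1 else 0)"
    by (simp add: sum.cartesian_product)
  finally show ?thesis unfolding img .
qed

lemma three_subsets: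
  fixes S :: "nat set"
  shows "{A. A \<subseteq> S \<and> card A = 3} = {e. \<exists>i j k. e = {i,j,k} \<and> i\<in>S \<and> j\<in>S \<and> k\<in>S \<and> i<j \<and> j<k \<and> True}"
proof
  show "{A. A \<subseteq> S \<and> card A = 3} \<subseteq> {e. \<exists>i j k. e = {i,j,k} \<and> i\<in>S \<and> j\<in>S \<and> k\<in>S \<and> i<j \<and> j<k \<and> True}"
  proof
    fix A assume "A \<in> {A. A \<subseteq> S \<and> card A = 3}"
    then have AS: "A \<subseteq> S" and c: "card A = 3" by auto
    then obtain x y z where A: "A = {x,y,z}" "x \<noteq> y" "y \<noteq> z" "x \<noteq> z"
      using card_3_iff by metis
    have "\<exists>i j k. {x,y,z} = {i,j,k} \<and> i<j \<and> j<k"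
    proof -
      consider "x<y" "y<z" | "x<z" "z<y" | "y<x" "x<z" | "y<z" "z<x" | "z<x" "x<y" | "z<y" "y<x"
        using A(2-4) by linarith
      then show ?thesis
      proof cases
        case 1 then show ?thesis by blast
      next
        case 2 then show ?thesis by (metis insert_commute)
      next
        case 3 then show ?thesis by (metis insert_commute)
      next
        case 4 then show ?thesis by (metis insert_commute)
      next
        case 5 then show ?thesis by (metis insert_commute)
      next
        case 6 then show ?thesis by (metis insert_commute)
      qed
    qed
    then obtain i j k where "{x,y,z} = {i,j,k}" "i<j" "j<k" by blast
    with A AS show "A \<in> {e. \<exists>i j k. e = {i,j,k} \<and> i\<in>S \<and> j\<in>S \<and> k\<in>S \<and> i<j \<and> j<k \<and> True}"
      by auto
  qed
  show "{e. \<exists>i j k. e = {i,j,k} \<and> i\<in>S \<and> j\<in>S \<and> k\<in>S \<and> i<j \<and> j<k \<and> True} \<subseteq> {A. A \<subseteq> S \<and> card A = 3}"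
    by auto
qed

lemma choose3: "6 * (s choose 3) = s * (s - 1) * (s - 2)"
proof (induction s)
  case 0 then show ?case by simp
next
  case (Suc s)
  have r: "Suc s choose 3 = (s choose 2) + (s choose 3)"
    by (simp add: numeral_3_eq_3 numeral_2_eq_2)
  have ev: "even (s * (s - 1))" by (cases "even s") auto
  have t: "2 * (s choose 2) = s * (s - 1)"
    unfolding choose_two using ev by simp
  have "6 * (Suc s choose 3) = 3 * (s * (s - 1)) + s * (s - 1) * (s - 2)"
    using r t Suc.IH by simp
  also have "\<dots> = Suc s * (Suc s - 1) * (Suc s - 2)"
  proof -
    consider "s = 0" | "s = 1" | m where "s = m + 2" by (metis add_2_eq_Suc' not0_implies_Suc One_nat_def)
    then show ?thesis
    proof cases
      case 3 then show ?thesis by (simp add: algebra_simps)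
    qed simp_all
  qed
  finally show ?case .
qed

lemma choose3_lower:
  assumes "real s \<ge> 4"
  shows "real (s choose 3) \<ge> real s ^ 3 / 24"
proof -
  have "6 * real (s choose 3) = real s * (real s - 1) * (real s - 2)"
  proof -
    have "real (6 * (s choose 3)) = real (s * (s - 1) * (s - 2))" by (simp only: choose3)
    then show ?thesis using assms by (simp add: of_nat_diff)
  qed
  moreover have "real s * (real s - 1) * (real s - 2) \<ge> real s ^ 3 / 4"
  proof -
    have "0 \<le> real s * (real s - 4)" using assms by simp
    then have "(real s - 1) * (real s - 2) \<ge> real s ^ 2 / 4"
      by (simp add: algebra_simps power2_eq_square)
    then have "real s * ((real s - 1) * (real s - 2)) \<ge> real s * (real s ^ 2 / 4)"
      by (rule mult_left_mono) (use assms in simp)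
    then show ?thesis by (simp add: algebra_simps power2_eq_square power3_eq_cube)
  qed
  ultimately show ?thesis by simp
qed


lemma edges_eq_TT:
  assumes S: "S \<subseteq> {..<n}"
  shows "real (card {e\<in>Ered n w. e \<subseteq> S}) = TT w S"
proof -
  have finS: "finite S" using S finite_subset by blast
  have set: "{e\<in>Ered n w. e \<subseteq> S} =
     {e. \<exists>i j k. e = {i,j,k} \<and> i\<in>S \<and> j\<in>S \<and> k\<in>S \<and> i<j \<and> j<k \<and> (w i j \<and> \<not> w j k \<and> \<not> w i k)}"
  proof (intro equalityI subsetI)
    fix e assume "e \<in> {e\<in>Ered n w. e \<subseteq> S}"
    then obtain i j k where h: "e = {i,j,k}" "i<j" "j<k" "k<n" "w i j" "\<not> w j k" "\<not> w i k" "e \<subseteq> S"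
      unfolding Ered_def by blast
    then show "e \<in> {e. \<exists>i j k. e = {i,j,k} \<and> i\<in>S \<and> j\<in>S \<and> k\<in>S \<and> i<j \<and> j<k \<and> (w i j \<and> \<not> w j k \<and> \<not> w i k)}"
      by blast
  next
    fix e assume "e \<in> {e. \<exists>i j k. e = {i,j,k} \<and> i\<in>S \<and> j\<in>S \<and> k\<in>S \<and> i<j \<and> j<k \<and> (w i j \<and> \<not> w j k \<and> \<not> w i k)}"
    then obtain i j k where h: "e = {i,j,k}" "i\<in>S" "j\<in>S" "k\<in>S" "i<j" "j<k" "w i j" "\<not> w j k" "\<not> w i k"
      by blast
    have "k < n" using S h(4) by auto
    then have "e \<in> Ered n w" unfolding Ered_def using h by blast
    moreover have "e \<subseteq> S" using h by blast
    ultimately show "e \<in> {e\<in>Ered n w. e \<subseteq> S}" by blast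
  qed
  have "real (card {e\<in>Ered n w. e \<subseteq> S}) =
     (\<Sum>i\<in>S. \<Sum>j\<in>S. \<Sum>k\<in>S. if i<j \<and> j<k \<and> (w i j \<and> \<not> w j k \<and> \<not> w i k) then 1 else 0)"
    unfolding set by (rule triple_card[OF finS])
  also have "\<dots> = TT w S"
    unfolding TT_def rr_def by (intro sum.cong refl) auto
  finally show ?thesis .
qed

lemma N3_eq:
  assumes finS: "finite S"
  shows "N3 S = real (card S choose 3)"
proof -
  have "card S choose 3 = card {A. A \<subseteq> S \<and> card A = 3}" using n_subsets[OF finS] by simp
  also have "\<dots> = card {e. \<exists>i j k. e = {i,j,k} \<and> i\<in>S \<and> j\<in>S \<and> k\<in>S \<and> i<j \<and> j<k \<and> True}"
    by (simp only: three_subsets)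
  finally have "real (card S choose 3) = (\<Sum>i\<in>S. \<Sum>j\<in>S. \<Sum>k\<in>S. if i<j \<and> j<k \<and> True then 1 else 0)"
    using triple_card[OF finS, of "\<lambda>_ _ _. True"] by simp
  then show ?thesis unfolding N3_def by simp
qed

lemma density_bound:
  fixes n :: nat and w and \<gamma> \<delta> :: real and S :: "nat set"
  assumes S: "S \<subseteq> {..<n}" and g: "\<gamma> \<ge> 0" and dl: "\<delta> > 0"
    and disc: "\<And>X Y. X \<subseteq> {..<n} \<Longrightarrow> Y \<subseteq> {..<n} \<Longrightarrow>
                 \<bar>\<Sum>x\<in>X. \<Sum>y\<in>Y. if x < y then ff w x y else 0\<bar> \<le> \<gamma> * real n^2"
    and s4: "real (card S) \<ge> 4"
    and gb: "3 * \<gamma> * real n^3 \<le> \<delta> * real (card S)^3 / 24"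
  shows "edge_density (Ered n w) S \<ge> 4/27 - \<delta>"
proof -
  have finS: "finite S" using S finite_subset by blast
  have N: "N3 S = real (card S choose 3)" by (rule N3_eq[OF finS])
  have low: "real (card S choose 3) \<ge> real (card S)^3 / 24" by (rule choose3_lower[OF s4])
  have Npos: "N3 S > 0" using N low s4 by (smt (verit) zero_less_power divide_pos_pos)
  have "\<delta> * (real (card S)^3 / 24) \<le> \<delta> * N3 S"
    by (rule mult_left_mono) (use low N dl in simp_all)
  then have "3 * \<gamma> * real n^3 \<le> \<delta> * N3 S"
    using gb by simp
  moreover have "TT w S \<ge> 4/27 * N3 S - 3 * \<gamma> * real n^3"
    by (rule count_bound[OF S g disc])
  ultimately have "TT w S \<ge> (4/27 - \<delta>) * N3 S" by (simp add: algebra_simps)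
  then have "(4/27 - \<delta>) \<le> TT w S / N3 S" using Npos by (simp add: pos_le_divide_eq)
  then show ?thesis unfolding edge_density_def using edges_eq_TT[OF S, of w] N by simp
qed

lemma key:
  fixes l :: nat and \<delta> :: real
  assumes l5: "l \<ge> 5" and nd: "\<not> 3 dvd l" and dl: "0 < \<delta>"
  shows "\<forall>eps>0. \<forall>N. \<exists>n\<ge>N. \<exists>E::nat set set.
            hypergraph3 {..<n} E \<and> free_of {..<l} (tight_cycle_edges l) {..<n} E \<and>
            linear_density eps {..<n} E \<ge> 4/27 - \<delta>"
proof (intro allI impI)
  fix eps :: real and N :: nat
  assume eps: "eps > 0"
  define e' where "e' = min eps 1"
  have e'pos: "e' > 0" and e'le: "e' \<le> eps" "e' \<le> 1" using eps unfolding e'_def by auto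
  define \<gamma> where "\<gamma> = \<delta> * e'^3 / 72"
  have gpos: "\<gamma> > 0" unfolding \<gamma>_def using dl e'pos by simp
  define M0 where "M0 = nat \<lceil>4 / e'\<rceil> + nat \<lceil>ln 8 / (2 * \<gamma>^2)\<rceil> + 1"
  define n where "n = max N M0"
  have nN: "n \<ge> N" unfolding n_def by simp
  have nM: "real n \<ge> real M0" unfolding n_def by simp
  have "n \<ge> M0" unfolding n_def by simp
  then have n1: "n > 0" unfolding M0_def by linarith
  have n4: "real n \<ge> 4 / e'" using nM unfolding M0_def by linarith
  have nl: "real n > ln 8 / (2 * \<gamma>^2)" using nM unfolding M0_def by linarith
  have en4: "e' * real n \<ge> 4" using n4 e'pos by (simp add: field_simps)
  have small: "2 * 4^n * exp (-2*\<gamma>^2*real n^2) < 1"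
  proof -
    have "(2::real) \<le> 2^n" using n1 by (cases n) auto
    then have "2 * 4^n \<le> (2::real)^n * 4^n" by simp
    also have "\<dots> = 8^n" by (simp add: power_mult_distrib[symmetric])
    also have "\<dots> = exp (real n * ln 8)" by (simp add: exp_of_nat_mult)
    finally have a: "2 * 4^n \<le> exp (real n * ln 8)" .
    have "ln 8 < 2 * \<gamma>^2 * real n" using nl gpos by (simp add: pos_divide_less_eq mult.commute)
    then have "real n * ln 8 < real n * (2 * \<gamma>^2 * real n)" using n1 by simp
    then have b: "real n * ln 8 - 2*\<gamma>^2*real n^2 < 0" by (simp add: power2_eq_square algebra_simps)
    have "2 * 4^n * exp (-2*\<gamma>^2*real n^2) \<le> exp (real n * ln 8) * exp (-2*\<gamma>^2*real n^2)"
      using a by simp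
    also have "\<dots> = exp (real n * ln 8 - 2*\<gamma>^2*real n^2)" by (simp add: exp_add[symmetric])
    also have "\<dots> < 1" using b by simp
    finally show ?thesis .
  qed
  obtain \<omega> :: "nat \<times> nat \<Rightarrow> bool" where good: "\<And>X Y. X \<subseteq> {..<n} \<Longrightarrow> Y \<subseteq> {..<n} \<Longrightarrow>
     \<bar>(\<Sum>i\<in>{p\<in>X\<times>Y. fst p < snd p}. if \<omega> i then 1 else 0) - real (card {p\<in>X\<times>Y. fst p < snd p}) / 3\<bar> < \<gamma> * real n^2"
    using good_exists[OF gpos n1 small] by blast
  define w where "w = (\<lambda>i j. \<omega> (i,j))"
  have disc: "\<bar>\<Sum>x\<in>X. \<Sum>y\<in>Y. if x < y then ff w x y else 0\<bar> \<le> \<gamma> * real n^2"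
    if X: "X \<subseteq> {..<n}" and Y: "Y \<subseteq> {..<n}" for X Y
  proof -
    have finX: "finite X" using X finite_subset by blast
    have finY: "finite Y" using Y finite_subset by blast
    have "(\<Sum>x\<in>X. \<Sum>y\<in>Y. if x < y then ff w x y else 0) =
          (\<Sum>p\<in>X\<times>Y. if fst p < snd p then (if \<omega> p then 1 else 0) - 1/3 else 0)"
    proof -
      have "(\<Sum>x\<in>X. \<Sum>y\<in>Y. if x < y then ff w x y else 0) =
          (\<Sum>(x,y)\<in>X\<times>Y. if x < y then ff w x y else 0)"
        by (simp add: sum.cartesian_product)
      also have "\<dots> = (\<Sum>p\<in>X\<times>Y. if fst p < snd p then (if \<omega> p then 1 else 0) - 1/3 else 0)"
        by (intro sum.cong refl) (auto simp: ff_def rr_def w_def)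
      finally show ?thesis .
    qed
    also have "\<dots> = (\<Sum>p\<in>{p\<in>X\<times>Y. fst p < snd p}. (if \<omega> p then 1 else 0) - 1/3)"
      using finX finY by (simp add: sum.inter_filter)
    also have "\<dots> = (\<Sum>p\<in>{p\<in>X\<times>Y. fst p < snd p}. if \<omega> p then 1 else 0) - real (card {p\<in>X\<times>Y. fst p < snd p}) / 3"
      by (simp add: sum_subtractf)
    finally show ?thesis using good[OF X Y] by simp
  qed
  define E where "E = Ered n w"
  have hyp: "hypergraph3 {..<n} E"
    unfolding hypergraph3_def E_def Ered_def by auto
  have free: "free_of {..<l} (tight_cycle_edges l) {..<n} E"
    unfolding E_def by (rule cycle_free[OF l5 nd])
  have dens: "linear_density eps {..<n} E \<ge> 4/27 - \<delta>"
  proof -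
    define D where "D = {edge_density E S | S. S \<subseteq> {..<n} \<and> real (card S) \<ge> eps * real (card {..<n})}"
    have ld: "linear_density eps {..<n} E = (if D = {} then 1 else Min D)"
      unfolding linear_density_def D_def Let_def by simp
    show ?thesis
    proof (cases "D = {}")
      case True
      then show ?thesis using ld dl by simp
    next
      case False
      have "D \<subseteq> (edge_density E) ` Pow {..<n}" unfolding D_def by auto
      then have finD: "finite D" by (rule finite_subset) simp
      have "Min D \<in> D" using Min_in[OF finD False] .
      then obtain S where S: "S \<subseteq> {..<n}" "real (card S) \<ge> eps * real n" and mS: "Min D = edge_density E S"
        unfolding D_def by auto
      have sge: "real (card S) \<ge> e' * real n"
        using S(2) e'le(1) by (smt (verit) mult_right_mono of_nat_0_le_iff)
      have s4: "real (card S) \<ge> 4" using sge en4 by simp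
      have "3 * \<gamma> * real n^3 = \<delta> * (e' * real n)^3 / 24"
        unfolding \<gamma>_def by (simp add: power_mult_distrib)
      also have "\<dots> \<le> \<delta> * real (card S)^3 / 24"
      proof -
        have "(e' * real n)^3 \<le> real (card S)^3"
          by (rule power_mono[OF sge]) (use e'pos in simp)
        then show ?thesis using dl by simp
      qed
      finally have gb: "3 * \<gamma> * real n^3 \<le> \<delta> * real (card S)^3 / 24" .
      have "edge_density E S \<ge> 4/27 - \<delta>"
        unfolding E_def by (rule density_bound[OF S(1) _ dl disc s4 gb]) (use gpos in simp_all)
      then show ?thesis using ld False mS by simp
    qed
  qed
  show "\<exists>n\<ge>N. \<exists>E::nat set set. hypergraph3 {..<n} E \<and> free_of {..<l} (tight_cycle_edges l) {..<n} E \<and>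
            linear_density eps {..<n} E \<ge> 4/27 - \<delta>"
    using nN hyp free dens by blast
qed

theorem proposition2p4:
  fixes l :: nat
  assumes "l \<ge> 5" and "\<not> 3 dvd l"
  shows "4 / 27 \<le> uniform_turan_density {..<l} (tight_cycle_edges l)"
proof -
  define A where "A = {d. 0 \<le> d \<and> d \<le> 1 \<and>
        (\<forall>eps>0. \<forall>N. \<exists>n\<ge>N. \<exists>E::nat set set.
            hypergraph3 {..<n} E \<and> free_of {..<l} (tight_cycle_edges l) {..<n} E \<and>
            linear_density eps {..<n} E \<ge> d)}"
  have u: "uniform_turan_density {..<l} (tight_cycle_edges l) = Sup A"
    unfolding uniform_turan_density_def A_def ..
  have bdd: "bdd_above A" unfolding A_def bdd_above_def by auto
  have mem: "4/27 - \<delta> \<in> A" if "0 < \<delta>" "\<delta> \<le> 4/27" for \<delta>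
    unfolding A_def using key[OF assms that(1)] that by simp
  show ?thesis
  proof (rule ccontr)
    assume "\<not> 4 / 27 \<le> uniform_turan_density {..<l} (tight_cycle_edges l)"
    then have lt: "Sup A < 4/27" using u by simp
    define \<delta> where "\<delta> = min ((4/27 - Sup A)/2) (4/27)"
    have "0 < \<delta>" "\<delta> \<le> 4/27" using lt unfolding \<delta>_def by auto
    then have "4/27 - \<delta> \<in> A" by (rule mem)
    then have "4/27 - \<delta> \<le> Sup A" using bdd by (rule cSup_upper)
    moreover have "\<delta> \<le> (4/27 - Sup A)/2" unfolding \<delta>_def by (rule min.cobounded1)
    ultimately show False using lt by (simp add: field_simps)
  qed
qed

end
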